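(* Let $(S,d)$ be a complete metric space with a Hausdorff topology $\sigma$ compatible with $d$, let $\phi,\phi_\epsilon:S\to(-\infty,+\infty]$ ($\epsilon>0$) and $\epsilon(\tau)>0$ with $\epsilon(\tau)\to0$ as $\tau\to0$, and suppose $\phi,(\phi_\epsilon)$ satisfy (A1), (A2), and (A3) with this choice $\epsilon(\tau)$ (see context). Let $r(\epsilon)>0$ with $r(\epsilon)\uparrow+\infty$ as $\epsilon\to0$, fix $u_{\star\star}\in S$, and set $\tilde\phi_\epsilon=\phi_\epsilon+\mathbb{I}_{\{d(u_{\star\star},\cdot)\le r(\epsilon)\}}$, where $\mathbb{I}_V=0$ on $V$ and $+\infty$ on $S\setminus V$. Then $\phi,(\tilde\phi_\epsilon)_{\epsilon>0}$ also satisfy (A1), (A2), and (A3) with the same choice $\epsilon(\tau)$.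
   Context: $\sigma$ compatible with $d$: if $u_n\stackrel{\sigma}{\rightharpoonup}u$, $v_n\stackrel{\sigma}{\rightharpoonup}v$ then $\liminf_n d(u_n,v_n)\ge d(u,v)$; if $d(u_n,v_n)\to0$ and $u_n\stackrel{\sigma}{\rightharpoonup}u$ then $v_n\stackrel{\sigma}{\rightharpoonup}u$. Local slope $|\partial\phi|(v)=\limsup_{w\stackrel{d}{\to}v}\frac{(\phi(v)-\phi(w))^+}{d(v,w)}$; relaxed slope $|\partial^-\phi|(u)=\inf\{\liminf_n|\partial\phi|(u_n): u_n\stackrel{\sigma}{\rightharpoonup}u,\ \sup_n\{d(u_n,u),\phi(u_n)\}<+\infty\}$; $\mathcal{Y}_\tau f(u)=\inf_{v}\{f(v)+\frac1{2\tau}d^2(v,u)\}$. For a family $(f_\epsilon)$: (A1) there exist $A,B>0,u_\star$ with $f_\epsilon\ge-A-Bd^2(\cdot,u_\star)$ for all $\epsilon$, and for $\epsilon_n\to0$, $\sup_{n,m}\{f_{\epsilon_n}(u_n),d(u_n,u_m)\}<\infty$ implies a $\sigma$-convergent subsequence; (A2) for $\epsilon_n\to0$, $\sup_{n,m}d(u_n,u_m)<\infty$ and $u_n\stackrel{\sigma}{\rightharpoonup}u$ imply $\liminf_n f_{\epsilon_n}(u_n)\ge\phi(u)$; (A3) for all $u_\tau\stackrel{\sigma}{\rightharpoonup}u$ with $\sup_\tau\{f_{\epsilon(\tau)}(u_\tau),d(u_\tau,u)\}<\infty$, $\liminf_{\tau\to0}\frac{f_{\epsilon(\tau)}(u_\tau)-\mathcal{Y}_\tau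 f_{\epsilon(\tau)}(u_\tau)}{\tau}\ge\frac12|\partial^-\phi|^2(u)$. *)

theory Defs
  imports "HOL-Analysis.Analysis"
begin

text \<open>The metric space (S,d) is the type 'a of class complete_space with d = dist;
  the second (Hausdorff) topology sigma is an abstract topology on 'a.\<close>

definition compatible :: "'a::metric_space topology \<Rightarrow> bool" where
  "compatible \<sigma> \<longleftrightarrow>
     (\<forall>us vs u v. limitin \<sigma> us u sequentially \<and> limitin \<sigma> vs v sequentially \<longrightarrow>
        liminf (\<lambda>n. ereal (dist (us n) (vs n))) \<ge> ereal (dist u v)) \<and>
     (\<forall>us vs u. (\<lambda>n. dist (us n) (vs n)) \<longlonglongrightarrow> 0 \<and> limitin \<sigma> us u sequentially \<longrightarrow>
        limitin \<sigma> vs u sequentially)"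

text \<open>Local slope: limsup over w -> v (w different from v) of (phi v - phi w)^+ / d(v,w);
  the outer max with 0 gives the usual value 0 at isolated points.\<close>
definition local_slope :: "('a::metric_space \<Rightarrow> ereal) \<Rightarrow> 'a \<Rightarrow> ereal" where
  "local_slope \<phi> v =
     max 0 (Limsup (at v) (\<lambda>w. max 0 (\<phi> v - \<phi> w) / ereal (dist v w)))"

definition relaxed_slope :: "'a::metric_space topology \<Rightarrow> ('a \<Rightarrow> ereal) \<Rightarrow> 'a \<Rightarrow> ereal" where
  "relaxed_slope \<sigma> \<phi> u =
     Inf {liminf (\<lambda>n. local_slope \<phi> (us n)) | us.
            limitin \<sigma> us u sequentially \<and>
            (\<exists>C::real. \<forall>n. dist (us n) u \<le> C \<and> \<phi> (us n) \<le> ereal C)}"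

definition yosida :: "real \<Rightarrow> ('a::metric_space \<Rightarrow> ereal) \<Rightarrow> 'a \<Rightarrow> ereal" where
  "yosida \<tau> f u = (INF v. f v + ereal ((dist v u)\<^sup>2 / (2 * \<tau>)))"

text \<open>Family (f eps)_{eps>0} is encoded as f :: real => 'a => ereal, only eps > 0 used.\<close>

definition A1 :: "'a::metric_space topology \<Rightarrow> (real \<Rightarrow> 'a \<Rightarrow> ereal) \<Rightarrow> bool" where
  "A1 \<sigma> f \<longleftrightarrow>
     (\<exists>A B :: real. \<exists>ustar. A > 0 \<and> B > 0 \<and>
        (\<forall>\<epsilon>>0. \<forall>u. f \<epsilon> u \<ge> ereal (- A - B * (dist u ustar)\<^sup>2))) \<and>
     (\<forall>eps us. (\<forall>n. eps n > 0) \<and> eps \<longlonglongrightarrow> 0 \<and>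
        (\<exists>C::real. \<forall>n m. f (eps n) (us n) \<le> ereal C \<and> dist (us n) (us m) \<le> C) \<longrightarrow>
        (\<exists>r u. strict_mono r \<and> limitin \<sigma> (us \<circ> r) u sequentially))"

definition A2 :: "'a::metric_space topology \<Rightarrow> ('a \<Rightarrow> ereal) \<Rightarrow> (real \<Rightarrow> 'a \<Rightarrow> ereal) \<Rightarrow> bool" where
  "A2 \<sigma> \<phi> f \<longleftrightarrow>
     (\<forall>eps us u. (\<forall>n. eps n > 0) \<and> eps \<longlonglongrightarrow> 0 \<and>
        (\<exists>C::real. \<forall>n m. dist (us n) (us m) \<le> C) \<and> limitin \<sigma> us u sequentially \<longrightarrow>
        liminf (\<lambda>n. f (eps n) (us n)) \<ge> \<phi> u)"

text \<open>(A3), with the family u_tau, tau -> 0, read along arbitrary sequences tau_n -> 0+.\<close>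
definition A3 :: "'a::metric_space topology \<Rightarrow> ('a \<Rightarrow> ereal) \<Rightarrow> (real \<Rightarrow> 'a \<Rightarrow> ereal)
                   \<Rightarrow> (real \<Rightarrow> real) \<Rightarrow> bool" where
  "A3 \<sigma> \<phi> f \<epsilon> \<longleftrightarrow>
     (\<forall>taus us u. (\<forall>n. taus n > 0) \<and> taus \<longlonglongrightarrow> 0 \<and> limitin \<sigma> us u sequentially \<and>
        (\<exists>C::real. \<forall>n. f (\<epsilon> (taus n)) (us n) \<le> ereal C \<and> dist (us n) u \<le> C) \<longrightarrow>
        liminf (\<lambda>n. (f (\<epsilon> (taus n)) (us n) - yosida (taus n) (f (\<epsilon> (taus n))) (us n))
                      / ereal (taus n))
          \<ge> (relaxed_slope \<sigma> \<phi> u) ^ 2 / 2)"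

end

theory Submission
  imports Defs
begin

lemma real_key:
  fixes A B C D' x a tau R :: real
  assumes "A > 0" "B > 0" "tau > 0" "1/(2*tau) \<ge> 4*B" "x \<ge> R" "R \<ge> 0"
    "2*B*R^2 \<ge> C + A + 2*B*D'^2" "a \<le> x + D'" "a \<ge> 0" "D' \<ge> 0"
  shows "-A - B*a^2 + x^2/(2*tau) \<ge> C"
proof -
  have x0: "x \<ge> 0" using assms by linarith
  have "a^2 \<le> (x+D')^2" using assms x0 by (intro power_mono) auto
  also have "\<dots> \<le> 2*x^2 + 2*D'^2" using zero_le_power2[of "x-D'"]
    by (simp add: power2_diff power2_sum)
  finally have a2: "a^2 \<le> 2*x^2 + 2*D'^2" .
  have "x^2/(2*tau) = x^2 * (1/(2*tau))" by simp
  also have "\<dots> \<ge> x^2 * (4*B)" using assms by (intro mult_left_mono) auto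
  finally have q: "x^2/(2*tau) \<ge> 4*B*x^2" by (simp add: mult.commute)
  have "R^2 \<le> x^2" using assms by (intro power_mono) auto
  hence "2*B*R^2 \<le> 2*B*x^2" using assms by simp
  have "B*a^2 \<le> B*(2*x^2 + 2*D'^2)" using a2 assms by (intro mult_left_mono) auto
  hence b: "B*a^2 \<le> 2*B*x^2 + 2*B*D'^2" by (simp add: algebra_simps)
  show ?thesis using q b \<open>2*B*R^2 \<le> 2*B*x^2\<close> assms(7) by linarith
qed


lemma yosida_eq:
  fixes f :: "'a::metric_space \<Rightarrow> ereal" and g :: "'a \<Rightarrow> ereal"
  assumes ge: "\<And>v. f v \<le> g v" and eqw: "g w = f w"
    and inside: "\<And>v. g v \<noteq> f v \<Longrightarrow> g w \<le> f v + ereal ((dist v w)\<^sup>2 / (2 * \<tau>))"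
  shows "yosida \<tau> g w = yosida \<tau> f w"
  unfolding yosida_def
proof (rule antisym)
  show "(INF v. f v + ereal ((dist v w)\<^sup>2 / (2 * \<tau>))) \<le> (INF v. g v + ereal ((dist v w)\<^sup>2 / (2 * \<tau>)))"
    by (intro INF_mono' add_right_mono ge)
  show "(INF v. g v + ereal ((dist v w)\<^sup>2 / (2 * \<tau>))) \<le> (INF v. f v + ereal ((dist v w)\<^sup>2 / (2 * \<tau>)))"
  proof (rule INF_greatest)
    fix v assume "v \<in> (UNIV::'a set)"
    show "(INF v. g v + ereal ((dist v w)\<^sup>2 / (2 * \<tau>))) \<le> f v + ereal ((dist v w)\<^sup>2 / (2 * \<tau>))"
    proof (cases "g v = f v")
      case True
      have "(INF v. g v + ereal ((dist v w)\<^sup>2 / (2 * \<tau>))) \<le> g v + ereal ((dist v w)\<^sup>2 / (2 * \<tau>))"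
        by (rule INF_lower) simp
      then show ?thesis using True by simp
    next
      case False
      have "(INF v. g v + ereal ((dist v w)\<^sup>2 / (2 * \<tau>))) \<le> g w + ereal ((dist w w)\<^sup>2 / (2 * \<tau>))"
        by (rule INF_lower) simp
      also have "\<dots> = g w" by simp
      also have "\<dots> \<le> f v + ereal ((dist v w)\<^sup>2 / (2 * \<tau>))" using inside[OF False] .
      finally show ?thesis .
    qed
  qed
qed

theorem mainTheorem9:
  fixes \<sigma> :: "'a::complete_space topology"
    and \<phi> :: "'a \<Rightarrow> ereal"
    and f :: "real \<Rightarrow> 'a \<Rightarrow> ereal"
    and \<epsilon> :: "real \<Rightarrow> real"
    and r :: "real \<Rightarrow> real"
    and u2 :: 'a
  assumes "topspace \<sigma> = UNIV" and "Hausdorff_space \<sigma>" and "compatible \<sigma>"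
    and "\<forall>u. \<phi> u > -\<infinity>"
    and "\<forall>e>0. \<forall>u. f e u > -\<infinity>"
    and "\<forall>\<tau>>0. \<epsilon> \<tau> > 0" and "(\<epsilon> \<longlongrightarrow> 0) (at_right 0)"
    and "A1 \<sigma> f" and "A2 \<sigma> \<phi> f" and "A3 \<sigma> \<phi> f \<epsilon>"
    and "\<forall>e>0. r e > 0"
    and "\<forall>e1 e2. 0 < e1 \<and> e1 \<le> e2 \<longrightarrow> r e2 \<le> r e1"
    and "filterlim r at_top (at_right 0)"
  shows "A1 \<sigma> (\<lambda>e u. if dist u2 u \<le> r e then f e u else \<infinity>) \<and>
         A2 \<sigma> \<phi> (\<lambda>e u. if dist u2 u \<le> r e then f e u else \<infinity>) \<and>
         A3 \<sigma> \<phi> (\<lambda>e u. if dist u2 u \<le> r e then f e u else \<infinity>) \<epsilon>"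
proof -
  define g where "g = (\<lambda>e u. if dist u2 u \<le> r e then f e u else (\<infinity>::ereal))"
  have gge: "\<And>e u. f e u \<le> g e u" by (simp add: g_def)
  have gC: "\<And>e u C. g e u \<le> ereal C \<Longrightarrow> g e u = f e u \<and> dist u2 u \<le> r e"
    by (auto simp: g_def split: if_splits)
  obtain A B ustar where AB: "A > 0" "B > 0"
      "\<And>e u. e > 0 \<Longrightarrow> f e u \<ge> ereal (- A - B * (dist u ustar)\<^sup>2)"
    using assms(8) unfolding A1_def by blast
  have a1: "A1 \<sigma> g"
    unfolding A1_def
  proof (intro conjI allI impI)
    show "\<exists>A B. \<exists>ustar. A > 0 \<and> B > 0 \<and> (\<forall>\<epsilon>>0. \<forall>u. g \<epsilon> u \<ge> ereal (- A - B * (dist u ustar)\<^sup>2))"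
    proof (intro exI conjI allI impI)
      fix e :: real and u assume "e > 0"
      show "ereal (- A - B * (dist u ustar)\<^sup>2) \<le> g e u"
        using AB(3)[OF \<open>e > 0\<close>, of u] gge[of e u] by (rule order_trans)
    qed (rule AB(1), rule AB(2))
  next
    fix eps :: "nat \<Rightarrow> real" and us
    assume h: "(\<forall>n. eps n > 0) \<and> eps \<longlonglongrightarrow> 0 \<and>
        (\<exists>C::real. \<forall>n m. g (eps n) (us n) \<le> ereal C \<and> dist (us n) (us m) \<le> C)"
    then obtain C where C: "\<forall>n m. g (eps n) (us n) \<le> ereal C \<and> dist (us n) (us m) \<le> C" by blast
    hence "\<forall>n m. f (eps n) (us n) \<le> ereal C \<and> dist (us n) (us m) \<le> C" using gC by metis
    thus "\<exists>r u. strict_mono r \<and> limitin \<sigma> (us \<circ> r) u sequentially"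
      using assms(8) h unfolding A1_def by blast
  qed
  have a2: "A2 \<sigma> \<phi> g"
    unfolding A2_def
  proof (intro allI impI)
    fix eps :: "nat \<Rightarrow> real" and us u
    assume h: "(\<forall>n. eps n > 0) \<and> eps \<longlonglongrightarrow> 0 \<and>
        (\<exists>C::real. \<forall>n m. dist (us n) (us m) \<le> C) \<and> limitin \<sigma> us u sequentially"
    hence "\<phi> u \<le> liminf (\<lambda>n. f (eps n) (us n))" using assms(9) unfolding A2_def by blast
    also have "\<dots> \<le> liminf (\<lambda>n. g (eps n) (us n))" by (intro Liminf_mono always_eventually allI gge)
    finally show "\<phi> u \<le> liminf (\<lambda>n. g (eps n) (us n))" .
  qed
  have a3: "A3 \<sigma> \<phi> g \<epsilon>"
    unfolding A3_def
  proof (intro allI impI)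
    fix taus :: "nat \<Rightarrow> real" and us u
    assume h: "(\<forall>n. taus n > 0) \<and> taus \<longlonglongrightarrow> 0 \<and> limitin \<sigma> us u sequentially \<and>
        (\<exists>C::real. \<forall>n. g (\<epsilon> (taus n)) (us n) \<le> ereal C \<and> dist (us n) u \<le> C)"
    then obtain C where C: "\<And>n. g (\<epsilon> (taus n)) (us n) \<le> ereal C" "\<And>n. dist (us n) u \<le> C" by blast
    have gf: "\<And>n. g (\<epsilon> (taus n)) (us n) = f (\<epsilon> (taus n)) (us n)"
      and inb: "\<And>n. dist u2 (us n) \<le> r (\<epsilon> (taus n))" using gC C(1) by blast+
    have fC: "\<And>n. f (\<epsilon> (taus n)) (us n) \<le> ereal C" using C(1) gf by metis
    have C0: "C \<ge> 0" using C(2)[of 0] zero_le_dist[of "us 0" u] by linarith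
    have lf: "liminf (\<lambda>n. (f (\<epsilon> (taus n)) (us n) - yosida (taus n) (f (\<epsilon> (taus n))) (us n))
                      / ereal (taus n)) \<ge> (relaxed_slope \<sigma> \<phi> u) ^ 2 / 2"
      using assms(10) h fC C(2) unfolding A3_def by blast
    define D where "D = C + dist u u2"
    define D' where "D' = C + dist u ustar"
    define K where "K = C + A + 2*B*D'^2"
    define R where "R = max 1 (\<bar>K\<bar>/(2*B))"
    have R1: "R \<ge> 1" unfolding R_def by simp
    have RK: "2*B*R^2 \<ge> K"
    proof -
      have "K \<le> 2*B*(\<bar>K\<bar>/(2*B))" using AB by simp
      also have "\<dots> \<le> 2*B*R" using AB unfolding R_def by (intro mult_left_mono) auto
      also have "\<dots> \<le> 2*B*R^2" using AB R1 by (intro mult_left_mono) (auto simp: power2_eq_square)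
      finally show ?thesis .
    qed
    have taur: "filterlim taus (at_right 0) sequentially"
      using h by (intro tendsto_imp_filterlim_at_right) auto
    have epsr: "filterlim \<epsilon> (at_right 0) (at_right 0)"
      apply (intro tendsto_imp_filterlim_at_right assms(7))
      using eventually_at_right_less[of "0::real"] assms(6) by (auto elim: eventually_mono)
    have rlim: "filterlim (\<lambda>n. r (\<epsilon> (taus n))) at_top sequentially"
      by (rule filterlim_compose[OF assms(13) filterlim_compose[OF epsr taur]])
    have ev1: "eventually (\<lambda>n. R + D \<le> r (\<epsilon> (taus n))) sequentially"
      using rlim unfolding filterlim_at_top by blast
    have ev2: "eventually (\<lambda>n. taus n < 1/(8*B)) sequentially"
      using h AB by (intro order_tendstoD(2)) auto
    have ev: "eventually (\<lambda>n. yosida (taus n) (g (\<epsilon> (taus n))) (us n) =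
                yosida (taus n) (f (\<epsilon> (taus n))) (us n)) sequentially"
      using ev1 ev2
    proof eventually_elim
      case (elim n)
      define E where "E = \<epsilon> (taus n)"
      define w where "w = us n"
      define \<tau> where "\<tau> = taus n"
      have tp: "\<tau> > 0" using h unfolding \<tau>_def by blast
      have Ep: "E > 0" using assms(6) tp unfolding E_def \<tau>_def by blast
      have q: "1/(2*\<tau>) \<ge> 4*B"
      proof -
        have "2*\<tau>*(4*B) \<le> 1" using elim(2) AB unfolding \<tau>_def by (simp add: field_simps)
        thus ?thesis using tp by (simp add: field_simps)
      qed
      have "yosida \<tau> (g E) w = yosida \<tau> (f E) w"
      proof (rule yosida_eq)
        show "\<And>v. f E v \<le> g E v" by (rule gge)
        show "g E w = f E w" using gf unfolding E_def w_def \<tau>_def by blast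
        fix v assume nv: "g E v \<noteq> f E v"
        hence far: "dist u2 v > r E" by (auto simp: g_def split: if_splits)
        define x where "x = dist v w"
        define a where "a = dist v ustar"
        have dw: "dist w u \<le> C" using C(2) unfolding w_def by blast
        have "dist u2 w \<le> D" unfolding D_def
          using dist_triangle[of u2 w u] dw by (simp add: dist_commute)
        moreover have "dist u2 v \<le> dist u2 w + x" unfolding x_def
          using dist_triangle[of u2 v w] by (simp add: dist_commute)
        ultimately have xR: "x \<ge> R" using far elim(1) unfolding E_def by linarith
        have "a \<le> x + dist w ustar" unfolding a_def x_def by (rule dist_triangle)
        moreover have "dist w ustar \<le> D'" unfolding D'_def
          using dist_triangle[of w ustar u] dw by (simp add: dist_commute)
        ultimately have aD: "a \<le> x + D'" by linarith
        have "C \<le> -A - B*a^2 + x^2/(2*\<tau>)"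
          by (rule real_key[where D'=D' and a=a and C=C, OF AB(1,2) tp q xR]) (use R1 RK aD C0 in \<open>simp_all add: K_def a_def D'_def\<close>)
        hence "ereal C \<le> ereal (-A - B*a^2) + ereal (x^2/(2*\<tau>))" by simp
        also have "\<dots> \<le> f E v + ereal ((dist v w)\<^sup>2 / (2 * \<tau>))"
          using AB(3)[OF Ep, of v] unfolding a_def x_def by (intro add_right_mono) auto
        finally have "ereal C \<le> f E v + ereal ((dist v w)\<^sup>2 / (2 * \<tau>))" .
        moreover have "g E w \<le> ereal C" using C(1) unfolding E_def w_def \<tau>_def by blast
        ultimately show "g E w \<le> f E v + ereal ((dist v w)\<^sup>2 / (2 * \<tau>))" by (rule order_trans[rotated])
      qed
      thus ?case unfolding E_def w_def \<tau>_def .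
    qed
    have "liminf (\<lambda>n. (g (\<epsilon> (taus n)) (us n) - yosida (taus n) (g (\<epsilon> (taus n))) (us n))
                      / ereal (taus n)) = liminf (\<lambda>n. (f (\<epsilon> (taus n)) (us n) - yosida (taus n) (f (\<epsilon> (taus n))) (us n))
                      / ereal (taus n))"
      by (rule Liminf_eq) (use ev gf in \<open>auto elim: eventually_mono\<close>)
    thus "liminf (\<lambda>n. (g (\<epsilon> (taus n)) (us n) - yosida (taus n) (g (\<epsilon> (taus n))) (us n))
                      / ereal (taus n)) \<ge> (relaxed_slope \<sigma> \<phi> u) ^ 2 / 2" using lf by simp
  qed
  show ?thesis unfolding g_def[symmetric] using a1 a2 a3 by (intro conjI)
qed

end
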